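(* Let $G$ be a finite, connected, simple, bridgeless, triangle-free cubic graph and let $\Lambda$ be a valid labeling of $\mathfrak{L}_2(G)$ such that no reduced clique is a self-intersection of any cycle in $\Gamma_\Lambda$. Then for every $\gamma\in\Gamma_\Lambda$ the projected walk $W_\gamma$ is a cycle of $G$.
   Context: $\mathcal{L}(H)$ is the line graph of $H$. Let $\mathcal{T}$ be the set of triangles of $\mathcal{L}(\mathcal{L}(G))$ formed by the three edges of a triangle of $\mathcal{L}(G)$. $\mathfrak{L}_2(G)$ has the vertex set of $\mathcal{L}(\mathcal{L}(G))$ and the edges of $\mathcal{L}(\mathcal{L}(G))$ not in any triangle of $\mathcal{T}$. For each edge $e$ of $G$, the reduced clique $\mathbb{X}_e$ is the subgraph of $\mathfrak{L}_2(G)$ on the four edges of $\mathcal{L}(G)$ incident to $e$, with all edges of $\mathfrak{L}_2(G)$ among them (a 4-cycle). A labeling $\Lambda$ gives each edge of $\mathfrak{L}_2(G)$ a label in $\{0,1\}$ ($1$ = open); it is valid if in every reduced clique each vertex is incident to two edges of that clique with different labels. $\Gamma_\Lambda$ is the set of connected components (cycles) of the subgraph formed by open edges. A reduced clique $\mathbb{X}$ is a self-intersection of $\gamma\in\Gamma_\Lambda$ if both open edges of $\mathbb{X}$ lie on $\gamma$. Projected walk: each vertex $f$ of $\mathfrak{L}_2(G)$ is an unordered pair of distinct edges of $G$ sharing an endpoint; if $\gamma$ has vertices $f_1,\dots,f_m$ in cyclic order, consecutive $f_j,f_{j+1}$ (indices mod $m$) share exactly one edge $e_j$ of $G$, and $W_\gamma$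 is the cyclic sequence $(e_1,\dots,e_m)$. *)

theory Defs
  imports Main
begin

definition simple_graph :: "'a set \<Rightarrow> 'a set set \<Rightarrow> bool" where
  "simple_graph V E \<longleftrightarrow> finite V \<and>
     (\<forall>e\<in>E. \<exists>u v. u \<noteq> v \<and> u \<in> V \<and> v \<in> V \<and> e = {u, v})"

definition cubic :: "'a set \<Rightarrow> 'a set set \<Rightarrow> bool" where
  "cubic V E \<longleftrightarrow> (\<forall>v\<in>V. card {e\<in>E. v \<in> e} = 3)"

definition graph_connected :: "'a set \<Rightarrow> 'a set set \<Rightarrow> bool" where
  "graph_connected V E \<longleftrightarrow>
     (\<forall>u\<in>V. \<forall>v\<in>V. (u, v) \<in> {(x, y). {x, y} \<in> E}\<^sup>*)"

definition bridgeless :: "'a set \<Rightarrow> 'a set set \<Rightarrow> bool" where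
  "bridgeless V E \<longleftrightarrow> (\<forall>e\<in>E. graph_connected V (E - {e}))"

definition triangle_free :: "'a set set \<Rightarrow> bool" where
  "triangle_free E \<longleftrightarrow> \<not> (\<exists>a b c. {a, b} \<in> E \<and> {b, c} \<in> E \<and> {a, c} \<in> E)"

text \<open>Edge set of the line graph of a graph with edge set E (its vertex set is E).\<close>
definition line_edges :: "'b set set \<Rightarrow> 'b set set set" where
  "line_edges E = {{e, f} | e f. e \<in> E \<and> f \<in> E \<and> e \<noteq> f \<and> e \<inter> f \<noteq> {}}"

text \<open>Edges of the reduced double line graph: edges of L(L(G)) not lying in any
  triangle of L(L(G)) formed by the three edges of a triangle of L(G).
  Its vertex set is line_edges E.\<close>
definition L2_edges :: "'a set set \<Rightarrow> 'a set set set set" where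
  "L2_edges E = {a \<in> line_edges (line_edges E).
      \<not> (\<exists>x y z. {x, y} \<in> line_edges E \<and> {y, z} \<in> line_edges E \<and> {x, z} \<in> line_edges E \<and>
               a \<in> {{{x, y}, {y, z}}, {{y, z}, {x, z}}, {{x, y}, {x, z}}})}"

definition clique_verts :: "'a set set \<Rightarrow> 'a set \<Rightarrow> 'a set set set" where
  "clique_verts E e = {f \<in> line_edges E. e \<in> f}"

definition clique_edges :: "'a set set \<Rightarrow> 'a set \<Rightarrow> 'a set set set set" where
  "clique_edges E e = {a \<in> L2_edges E. a \<subseteq> clique_verts E e}"

text \<open>Labelings: True = open (label 1), False = label 0.\<close>
definition valid_labeling :: "'a set set \<Rightarrow> ('a set set set \<Rightarrow> bool) \<Rightarrow> bool" where
  "valid_labeling E \<Lambda> \<longleftrightarrow> (\<forall>e\<in>E. \<forall>v\<in>clique_verts E e. \<exists>a b.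
      a \<in> clique_edges E e \<and> b \<in> clique_edges E e \<and> v \<in> a \<and> v \<in> b \<and> \<Lambda> a \<noteq> \<Lambda> b)"

definition open_edges :: "'a set set \<Rightarrow> ('a set set set \<Rightarrow> bool) \<Rightarrow> 'a set set set set" where
  "open_edges E \<Lambda> = {a \<in> L2_edges E. \<Lambda> a}"

text \<open>Connected components of the open subgraph, each represented by its vertex set.\<close>
definition Gamma :: "'a set set \<Rightarrow> ('a set set set \<Rightarrow> bool) \<Rightarrow> 'a set set set set" where
  "Gamma E \<Lambda> = {{w. (u, w) \<in> {(x, y). {x, y} \<in> open_edges E \<Lambda>}\<^sup>*} | u. u \<in> \<Union>(open_edges E \<Lambda>)}"

text \<open>The reduced clique X_e is a self-intersection of the component with vertex set C
  if (both) open edges of X_e lie on that component.\<close>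
definition self_intersection :: "'a set set \<Rightarrow> ('a set set set \<Rightarrow> bool) \<Rightarrow> 'a set \<Rightarrow> 'a set set set \<Rightarrow> bool" where
  "self_intersection E \<Lambda> e C \<longleftrightarrow> (\<forall>a\<in>clique_edges E e. \<Lambda> a \<longrightarrow> a \<subseteq> C)"

definition cyclic_order :: "'a set set \<Rightarrow> ('a set set set \<Rightarrow> bool) \<Rightarrow> 'a set set set \<Rightarrow> 'a set set list \<Rightarrow> bool" where
  "cyclic_order E \<Lambda> C fs \<longleftrightarrow> distinct fs \<and> set fs = C \<and>
     (\<forall>j < length fs. {fs ! j, fs ! ((j + 1) mod length fs)} \<in> open_edges E \<Lambda>)"

definition projected_walk :: "'a set set list \<Rightarrow> 'a set list" where
  "projected_walk fs = map (\<lambda>j. THE e. e \<in> fs ! j \<inter> fs ! ((j + 1) mod length fs)) [0..<length fs]"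

definition is_cycle :: "'a set \<Rightarrow> 'a set set \<Rightarrow> 'a set list \<Rightarrow> bool" where
  "is_cycle V E es \<longleftrightarrow> length es \<ge> 3 \<and> set es \<subseteq> E \<and>
     (\<exists>vs. length vs = length es \<and> distinct vs \<and> set vs \<subseteq> V \<and>
        (\<forall>j < length es. es ! j = {vs ! j, vs ! ((j + 1) mod length es)}))"

end

theory Submission imports Defs begin

lemma line_edgesD:
  "f \<in> line_edges E \<Longrightarrow> \<exists>a b. f = {a,b} \<and> a \<in> E \<and> b \<in> E \<and> a \<noteq> b \<and> a \<inter> b \<noteq> {}"
  by (auto simp: line_edges_def)

lemma closure_C:
  assumes "C \<in> Gamma E \<Lambda>" "x \<in> C" "{x,y} \<in> open_edges E \<Lambda>"
  shows "y \<in> C"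
proof -
  from assms(1) obtain u where C: "C = {w. (u, w) \<in> {(x, y). {x, y} \<in> open_edges E \<Lambda>}\<^sup>*}"
    by (auto simp: Gamma_def)
  with assms(2,3) show ?thesis
    by (auto intro: rtrancl_into_rtrancl)
qed

lemma edgeD:
  assumes "simple_graph V E" "e \<in> E"
  shows "\<exists>u v. u \<noteq> v \<and> u \<in> V \<and> v \<in> V \<and> e = {u, v}"
  using assms by (auto simp: simple_graph_def)

lemma clique_card:
  assumes sg: "simple_graph V E" and cu: "cubic V E" and eE: "e \<in> E"
  shows "finite (clique_verts E e) \<and> card (clique_verts E e) \<le> 4"
proof -
  obtain u v where uv: "u \<noteq> v" "u \<in> V" "v \<in> V" "e = {u,v}" using edgeD[OF sg eE] by blast
  define A where "A = {g\<in>E. u\<in>g}"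
  define B where "B = {g\<in>E. v\<in>g}"
  have cA: "card A = 3" using cu uv by (auto simp: cubic_def A_def)
  have cB: "card B = 3" using cu uv by (auto simp: cubic_def B_def)
  have fA: "finite A" using cA by (intro card_ge_0_finite) simp
  have fB: "finite B" using cB by (intro card_ge_0_finite) simp
  have eA: "e \<in> A" "e \<in> B" using uv eE by (auto simp: A_def B_def)
  have cA': "card (A - {e}) = 2" using cA eA fA by simp
  have cB': "card (B - {e}) = 2" using cB eA fB by simp
  have sub: "clique_verts E e \<subseteq> (\<lambda>g. {e,g}) ` ((A - {e}) \<union> (B - {e}))"
  proof
    fix f assume "f \<in> clique_verts E e"
    then have fL: "f \<in> line_edges E" and ef: "e \<in> f" by (auto simp: clique_verts_def)
    from line_edgesD[OF fL] obtain a b where ab: "f = {a,b}" "a \<in> E" "b \<in> E" "a \<noteq> b" "a \<inter> b \<noteq> {}" by blast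
    show "f \<in> (\<lambda>g. {e,g}) ` ((A - {e}) \<union> (B - {e}))"
    proof (cases "e = a")
      case True
      then have "b \<in> (A - {e}) \<union> (B - {e})" using ab uv by (auto simp: A_def B_def)
      moreover have "f = (\<lambda>g. {e,g}) b" using ab True by blast
      ultimately show ?thesis by (intro image_eqI) 
    next
      case False
      then have "e = b" using ef ab by auto
      then have aa: "a \<in> (A - {e}) \<union> (B - {e})" using ab uv by (auto simp: A_def B_def)
      have "f = (\<lambda>g. {e,g}) a" using ab \<open>e = b\<close> by blast
      then show ?thesis using aa by (rule image_eqI)
    qed
  qed
  have f2: "finite ((A - {e}) \<union> (B - {e}))" using fA fB by auto
  have "card ((A - {e}) \<union> (B - {e})) \<le> 4" using card_Un_le[of "A - {e}" "B - {e}"] cA' cB' by simp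
  moreover have "card (clique_verts E e) \<le> card ((\<lambda>g. {e,g}) ` ((A - {e}) \<union> (B - {e})))"
    by (rule card_mono) (use f2 sub in auto)
  moreover have "card ((\<lambda>g. {e,g}) ` ((A - {e}) \<union> (B - {e}))) \<le> card ((A - {e}) \<union> (B - {e}))"
    by (rule card_image_le[OF f2])
  moreover have "finite (clique_verts E e)" by (rule finite_subset[OF sub]) (use f2 in auto)
  ultimately show ?thesis by linarith
qed

lemma inter_single: "a \<noteq> b \<Longrightarrow> c \<noteq> d \<Longrightarrow> {a,b} \<noteq> {c,d} \<Longrightarrow> x \<in> {a,b} \<Longrightarrow> x \<in> {c,d}
  \<Longrightarrow> {a,b} \<inter> {c,d} = {x}"
  by auto

lemma two_eq: "x \<in> {a,b} \<Longrightarrow> y \<in> {a,b} \<Longrightarrow> x \<noteq> y \<Longrightarrow> {a,b} = {x,y}"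
  by auto

theorem lemma2p16:
  fixes V :: "'a set" and E :: "'a set set" and \<Lambda> :: "'a set set set \<Rightarrow> bool"
  assumes "simple_graph V E" and "graph_connected V E" and "bridgeless V E"
    and "triangle_free E" and "cubic V E"
    and "valid_labeling E \<Lambda>"
    and "\<not> (\<exists>C\<in>Gamma E \<Lambda>. \<exists>e\<in>E. self_intersection E \<Lambda> e C)"
  shows "\<forall>C\<in>Gamma E \<Lambda>. \<forall>fs. cyclic_order E \<Lambda> C fs \<longrightarrow> is_cycle V E (projected_walk fs)"
proof (intro ballI allI impI)
  note sg = assms(1) and cu = assms(5) and val = assms(6) and nosi = assms(7)
  fix C fs assume CG: "C \<in> Gamma E \<Lambda>" and co: "cyclic_order E \<Lambda> C fs"
  define m where "m = length fs"
  define nx where "nx j = Suc j mod m" for j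
  have dist: "distinct fs" and setfs: "set fs = C"
    and oe: "\<And>j. j < m \<Longrightarrow> {fs!j, fs!nx j} \<in> open_edges E \<Lambda>"
    using co by (auto simp: cyclic_order_def m_def nx_def)
  have "C \<noteq> {}" using CG by (auto simp: Gamma_def)
  hence m0: "m > 0" using setfs m_def by auto
  have nx_eq: "nx j = (if Suc j = m then 0 else Suc j)" if "j < m" for j
    using that by (auto simp: nx_def)
  have nx_lt: "nx j < m" if "j < m" for j using that nx_eq by auto
  have oeL: "{fs!j, fs!nx j} \<in> line_edges (line_edges E)" if "j < m" for j
    using oe[OF that] by (auto simp: open_edges_def L2_edges_def)
  have fsprops: "fs!j \<in> line_edges E \<and> fs!nx j \<in> line_edges E \<and> fs!j \<noteq> fs!nx j"
    if jm: "j < m" for j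
  proof -
    obtain a b where "{fs!j, fs!nx j} = {a,b}" "a \<in> line_edges E" "b \<in> line_edges E" "a \<noteq> b"
      using line_edgesD[OF oeL[OF jm]] by blast
    then show ?thesis by (auto simp: doubleton_eq_iff)
  qed
  have fsL: "fs!j \<in> line_edges E" if "j < m" for j using fsprops[OF that] by blast
  have fsne: "fs!j \<noteq> fs!nx j" if "j < m" for j using fsprops[OF that] by blast
  have fsint: "fs!j \<inter> fs!nx j \<noteq> {}" if jm: "j < m" for j
  proof -
    obtain a b where "{fs!j, fs!nx j} = {a,b}" "a \<inter> b \<noteq> {}"
      using line_edgesD[OF oeL[OF jm]] by blast
    then show ?thesis by (auto simp: doubleton_eq_iff)
  qed
  have m1: "m \<noteq> 1"
  proof
    assume "m = 1" then have "nx 0 = 0" by (simp add: nx_def)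
    with fsne[of 0] m0 show False by simp
  qed
  have m2: "m \<noteq> 2"
  proof
    assume m2: "m = 2"
    define f0 where "f0 = fs!0"
    define f1 where "f1 = fs!1"
    have n0: "nx 0 = 1" using m2 by (simp add: nx_def)
    have Cs: "C = {f0, f1}" using setfs m2 unfolding m_def f0_def f1_def
      by (auto simp: set_conv_nth less_2_cases_iff)
    obtain e where e: "e \<in> f0" "e \<in> f1" using fsint[of 0] n0 m2 unfolding f0_def f1_def by auto
    have f0L: "f0 \<in> line_edges E" using fsL[of 0] m2 f0_def by simp
    have f1L: "f1 \<in> line_edges E" using fsL[of 1] m2 f1_def by simp
    have f01: "f0 \<noteq> f1" using fsne[of 0] n0 m2 f0_def f1_def by simp
    obtain a b where ab: "f0 = {a,b}" "a \<in> E" "b \<in> E" "a \<noteq> b" using line_edgesD[OF f0L] by blast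
    obtain g where g: "g \<in> f0" "g \<noteq> e" "g \<in> E" using ab e by auto
    have f0cv: "f0 \<in> clique_verts E g" using f0L g by (simp add: clique_verts_def)
    obtain a1 b1 where "a1 \<in> clique_edges E g" "b1 \<in> clique_edges E g" "f0 \<in> a1" "f0 \<in> b1"
        "\<Lambda> a1 \<noteq> \<Lambda> b1"
      using val g(3) f0cv unfolding valid_labeling_def by blast
    then obtain a' where a': "a' \<in> clique_edges E g" "f0 \<in> a'" "\<Lambda> a'" by blast
    have a'L2: "a' \<in> L2_edges E" and a'sub: "a' \<subseteq> clique_verts E g"
      using a' by (auto simp: clique_edges_def)
    have a'open: "a' \<in> open_edges E \<Lambda>" using a'L2 a' by (simp add: open_edges_def)
    have "a' \<in> line_edges (line_edges E)" using a'L2 by (simp add: L2_edges_def)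
    from line_edgesD[OF this] obtain p q where pq: "a' = {p,q}" "p \<noteq> q" by blast
    define h where "h = (if f0 = p then q else p)"
    have h: "a' = {f0, h}" "h \<noteq> f0" using pq a'(2) unfolding h_def by auto
    have "f0 \<in> C" using Cs by simp
    have "h \<in> C" using closure_C[OF CG \<open>f0 \<in> C\<close>, of h] a'open h(1) by simp
    then have "h = f1" using h(2) Cs by simp
    then have "f1 \<in> clique_verts E g" using a'sub h(1) by simp
    then have "g \<in> f1" by (simp add: clique_verts_def)
    obtain c d where cd: "f1 = {c,d}" using line_edgesD[OF f1L] by blast
    have "f1 = {e,g}" using cd e g \<open>g \<in> f1\<close> by (metis two_eq)
    moreover have "f0 = {e,g}" using ab e g by (metis two_eq)
    ultimately show False using f01 by simp
  qed
  have m3: "m \<ge> 3" using m0 m1 m2 by linarith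
  have nx_ne: "nx j \<noteq> j" if "j < m" for j using that nx_eq m3 by auto
  define pv where "pv j = (if j = 0 then m - 1 else j - 1)" for j
  have pv_lt: "pv j < m" if "j < m" for j using that m3 by (auto simp: pv_def)
  have nx_pv: "nx (pv j) = j" if "j < m" for j using that m3 nx_eq pv_lt by (auto simp: pv_def)
  have pv_nx: "pv (nx j) = j" if "j < m" for j using that m3 nx_eq by (auto simp: pv_def)
  have pv_ne: "pv j \<noteq> j" if "j < m" for j using that m3 by (auto simp: pv_def)
  have pv_ne_nx: "pv j \<noteq> nx j" if "j < m" for j using that m3 nx_eq by (auto simp: pv_def)
  have pv_inj: "j = k" if "j < m" "k < m" "pv j = pv k" for j k
    using that nx_pv by metis
  have nx_inj: "j = k" if "j < m" "k < m" "nx j = nx k" for j k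
    using that pv_nx by metis
  define \<epsilon> where "\<epsilon> j = (THE e. e \<in> fs!j \<inter> fs!nx j)" for j
  have \<epsilon>I: "fs!j \<inter> fs!nx j = {\<epsilon> j}" if jm: "j < m" for j
  proof -
    obtain x where x: "x \<in> fs!j \<inter> fs!nx j" using fsint[OF jm] by blast
    obtain a b where ab: "fs!j = {a,b}" "a \<noteq> b" using line_edgesD[OF fsL[OF jm]] by blast
    obtain c d where cd: "fs!nx j = {c,d}" "c \<noteq> d" using line_edgesD[OF fsL[OF nx_lt[OF jm]]] by blast
    have single: "fs!j \<inter> fs!nx j = {x}"
      using inter_single[of a b c d x] ab cd fsne[OF jm] x by simp
    then have "\<epsilon> j = x" unfolding \<epsilon>_def by simp
    with single show ?thesis by simp
  qed
  have \<epsilon>in: "\<epsilon> j \<in> fs!j" "\<epsilon> j \<in> fs!nx j" if "j < m" for j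
    using \<epsilon>I[OF that] by auto
  have \<epsilon>E: "\<epsilon> j \<in> E" if jm: "j < m" for j
  proof -
    obtain a b where ab: "fs!j = {a,b}" "a \<in> E" "b \<in> E" using line_edgesD[OF fsL[OF jm]] by blast
    then show ?thesis using \<epsilon>in(1)[OF jm] by auto
  qed
  have pw: "projected_walk fs = map \<epsilon> [0..<m]"
    by (simp add: projected_walk_def \<epsilon>_def m_def nx_def)
  have aL: "{fs!j, fs!nx j} \<in> L2_edges E" if "j < m" for j
    using oe[OF that] by (simp add: open_edges_def)
  have acv: "{fs!j, fs!nx j} \<subseteq> clique_verts E (\<epsilon> j)" if "j < m" for j
    using fsL[OF that] fsL[OF nx_lt[OF that]] \<epsilon>in[OF that] by (simp add: clique_verts_def)
  have aC: "{fs!j, fs!nx j} \<subseteq> C" if "j < m" for j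
    using setfs that nx_lt[OF that] m_def by auto
  have fs_inj: "j = k" if "j < m" "k < m" "fs!j = fs!k" for j k
    using that dist m_def nth_eq_iff_index_eq by metis
  have \<epsilon>dist: "\<epsilon> j \<noteq> \<epsilon> k" if jm: "j < m" and km: "k < m" and jk: "j \<noteq> k" for j k
  proof
    assume eq: "\<epsilon> j = \<epsilon> k"
    define e where "e = \<epsilon> j"
    define a1 where "a1 = {fs!j, fs!nx j}"
    define a2 where "a2 = {fs!k, fs!nx k}"
    have eE: "e \<in> E" using \<epsilon>E[OF jm] e_def by simp
    have a1cv: "a1 \<subseteq> clique_verts E e" using acv[OF jm] a1_def e_def by simp
    have a2cv: "a2 \<subseteq> clique_verts E e" using acv[OF km] a2_def e_def eq by simp
    have a1C: "a1 \<subseteq> C" using aC[OF jm] a1_def by simp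
    have a2C: "a2 \<subseteq> C" using aC[OF km] a2_def by simp
    have "\<exists>z. z \<in> a2 \<and> z \<notin> a1"
    proof (rule ccontr)
      assume "\<not> (\<exists>z. z \<in> a2 \<and> z \<notin> a1)"
      then have in1: "fs!k \<in> a1" "fs!nx k \<in> a1" unfolding a2_def by auto
      have "fs!k \<noteq> fs!j" using fs_inj jm km jk by metis
      then have "fs!k = fs!nx j" using in1 a1_def by simp
      then have k1: "k = nx j" using fs_inj km nx_lt[OF jm] by metis
      have "fs!nx k \<noteq> fs!nx j" using fsne[OF km] \<open>fs!k = fs!nx j\<close> by simp
      then have "fs!nx k = fs!j" using in1 a1_def by simp
      then have "nx k = j" using fs_inj jm nx_lt[OF km] by metis
      then have "pv j = k" using pv_nx[OF km] by simp
      then show False using pv_ne_nx[OF jm] k1 by simp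
    qed
    then obtain z where z: "z \<in> a2" "z \<notin> a1" by blast
    have si: "self_intersection E \<Lambda> e C"
      unfolding self_intersection_def
    proof (intro ballI impI)
      fix a assume ace: "a \<in> clique_edges E e" and la: "\<Lambda> a"
      have aL2: "a \<in> L2_edges E" and acv': "a \<subseteq> clique_verts E e"
        using ace by (auto simp: clique_edges_def)
      have aop: "a \<in> open_edges E \<Lambda>" using aL2 la by (simp add: open_edges_def)
      have "a \<in> line_edges (line_edges E)" using aL2 by (simp add: L2_edges_def)
      from line_edgesD[OF this] obtain x y where xy: "a = {x,y}" "x \<noteq> y" by blast
      show "a \<subseteq> C"
      proof (rule ccontr)
        assume nC: "\<not> a \<subseteq> C"
        have xn: "x \<notin> C"
        proof
          assume "x \<in> C"
          moreover have "y \<in> C" using closure_C[OF CG \<open>x \<in> C\<close>, of y] aop xy by simp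
          ultimately show False using nC xy by simp
        qed
        have yn: "y \<notin> C"
        proof
          assume "y \<in> C"
          moreover have "x \<in> C" using closure_C[OF CG \<open>y \<in> C\<close>, of x] aop xy by (simp add: insert_commute)
          ultimately show False using nC xy by simp
        qed
        define S where "S = {fs!j, fs!nx j, x, y, z}"
        have "S \<subseteq> clique_verts E e" using a1cv a2cv acv' xy z unfolding S_def a1_def by auto
        moreover have "card S = 5"
        proof -
          have d1: "fs!j \<noteq> fs!nx j" using fsne[OF jm] .
          have d2: "x \<notin> a1" "y \<notin> a1" "x \<notin> a2" "y \<notin> a2" using xn yn a1C a2C by auto
          have n: "x \<noteq> fs!j" "x \<noteq> fs!nx j" "y \<noteq> fs!j" "y \<noteq> fs!nx j" "z \<noteq> fs!j" "z \<noteq> fs!nx j"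
            "z \<noteq> x" "z \<noteq> y"
            using d2 z unfolding a1_def by auto
          show ?thesis using d1 n xy(2) unfolding S_def by simp
        qed
        moreover have "finite (clique_verts E e) \<and> card (clique_verts E e) \<le> 4"
          using clique_card[OF sg cu eE] .
        ultimately show False using card_mono[of "clique_verts E e" S] by auto
      qed
    qed
    then show False using nosi CG eE by blast
  qed
  have fs_eq: "fs!j = {\<epsilon> (pv j), \<epsilon> j}" if jm: "j < m" for j
  proof -
    have "\<epsilon> (pv j) \<in> fs!j" using \<epsilon>in(2)[OF pv_lt[OF jm]] nx_pv[OF jm] by simp
    moreover have "\<epsilon> j \<in> fs!j" using \<epsilon>in(1)[OF jm] .
    moreover have "\<epsilon> (pv j) \<noteq> \<epsilon> j" using \<epsilon>dist[OF pv_lt[OF jm] jm pv_ne[OF jm]] .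
    moreover obtain a b where "fs!j = {a,b}" using line_edgesD[OF fsL[OF jm]] by blast
    ultimately show ?thesis by (metis two_eq)
  qed
  have \<epsilon>int: "\<epsilon> (pv j) \<inter> \<epsilon> j \<noteq> {}" if jm: "j < m" for j
  proof -
    obtain a b where ab: "fs!j = {a,b}" "a \<inter> b \<noteq> {}" using line_edgesD[OF fsL[OF jm]] by blast
    then show ?thesis using fs_eq[OF jm] by (auto simp: doubleton_eq_iff)
  qed
  define w where "w j = (THE v. v \<in> \<epsilon> (pv j) \<inter> \<epsilon> j)" for j
  have wI: "\<epsilon> (pv j) \<inter> \<epsilon> j = {w j}" if jm: "j < m" for j
  proof -
    obtain x where x: "x \<in> \<epsilon> (pv j) \<inter> \<epsilon> j" using \<epsilon>int[OF jm] by blast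
    obtain a b where ab: "\<epsilon> (pv j) = {a,b}" "a \<noteq> b" using edgeD[OF sg \<epsilon>E[OF pv_lt[OF jm]]] by blast
    obtain c d where cd: "\<epsilon> j = {c,d}" "c \<noteq> d" using edgeD[OF sg \<epsilon>E[OF jm]] by blast
    have single: "\<epsilon> (pv j) \<inter> \<epsilon> j = {x}"
      using inter_single[of a b c d x] ab cd \<epsilon>dist[OF pv_lt[OF jm] jm pv_ne[OF jm]] x by simp
    then have "w j = x" unfolding w_def by simp
    with single show ?thesis by simp
  qed
  have win: "w j \<in> \<epsilon> (pv j)" "w j \<in> \<epsilon> j" if "j < m" for j
    using wI[OF that] by auto
  have w_ne: "w j \<noteq> w (nx j)" if jm: "j < m" for j
  proof
    assume eq: "w j = w (nx j)"
    define x where "x = \<epsilon> (pv j)"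
    define y where "y = \<epsilon> j"
    define zz where "zz = \<epsilon> (nx j)"
    have njm: "nx j < m" using nx_lt[OF jm] .
    have xy: "x \<noteq> y" using \<epsilon>dist[OF pv_lt[OF jm] jm pv_ne[OF jm]] x_def y_def by simp
    have yz: "y \<noteq> zz" using \<epsilon>dist[OF jm njm] nx_ne[OF jm] y_def zz_def by metis
    have xz: "x \<noteq> zz" using \<epsilon>dist[OF pv_lt[OF jm] njm pv_ne_nx[OF jm]] x_def zz_def by simp
    have E3: "x \<in> E" "y \<in> E" "zz \<in> E" using \<epsilon>E pv_lt jm njm x_def y_def zz_def by auto
    have c1: "w j \<in> x" "w j \<in> y" using win[OF jm] x_def y_def by auto
    have c2: "w j \<in> zz" using win(2)[OF njm] eq zz_def by simp
    have L1: "{x,y} \<in> line_edges E" using E3 xy c1 unfolding line_edges_def by blast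
    have L2: "{y,zz} \<in> line_edges E" using E3 yz c1 c2 unfolding line_edges_def by blast
    have L3: "{x,zz} \<in> line_edges E" using E3 xz c1 c2 unfolding line_edges_def by blast
    have "fs!j = {x,y}" using fs_eq[OF jm] x_def y_def by simp
    moreover have "fs!nx j = {y,zz}" using fs_eq[OF njm] pv_nx[OF jm] y_def zz_def by simp
    ultimately have "{{x,y},{y,zz}} \<in> L2_edges E" using aL[OF jm] by simp
    then show False using L1 L2 L3 unfolding L2_edges_def by blast
  qed
  have \<epsilon>_eq: "\<epsilon> j = {w j, w (nx j)}" if jm: "j < m" for j
  proof -
    have "w (nx j) \<in> \<epsilon> j" using win(1)[OF nx_lt[OF jm]] pv_nx[OF jm] by simp
    moreover obtain a b where "\<epsilon> j = {a,b}" using edgeD[OF sg \<epsilon>E[OF jm]] by blast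
    ultimately show ?thesis using win(2)[OF jm] w_ne[OF jm] by (metis two_eq)
  qed
  have wV: "w j \<in> V" if jm: "j < m" for j
    using edgeD[OF sg \<epsilon>E[OF jm]] win(2)[OF jm] by auto
  have w_inj: "j = k" if jm: "j < m" and km: "k < m" and eq: "w j = w k" for j k
  proof (rule ccontr)
    assume jk: "j \<noteq> k"
    have k1: "k \<noteq> nx j"
    proof
      assume "k = nx j" with eq w_ne[OF jm] show False by simp
    qed
    have k2: "j \<noteq> nx k"
    proof
      assume "j = nx k" with eq w_ne[OF km] show False by simp
    qed
    have i1: "pv j \<noteq> pv k"
    proof
      assume "pv j = pv k" with pv_inj[OF jm km] jk show False by simp
    qed
    have i2: "pv j \<noteq> k"
    proof
      assume "pv j = k" then have "nx k = j" using nx_pv[OF jm] by simp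
      with k2 show False by simp
    qed
    have i3: "j \<noteq> pv k"
    proof
      assume "j = pv k" then have "nx j = k" using nx_pv[OF km] by simp
      with k1 show False by simp
    qed
    define z where "z = w j"
    have zV: "z \<in> V" using wV[OF jm] z_def by simp
    have cz: "card {e\<in>E. z \<in> e} = 3" using cu zV by (simp add: cubic_def)
    have fz: "finite {e\<in>E. z \<in> e}" using cz by (intro card_ge_0_finite) simp
    define S where "S = {\<epsilon> (pv j), \<epsilon> j, \<epsilon> (pv k), \<epsilon> k}"
    have Ssub: "S \<subseteq> {e\<in>E. z \<in> e}"
      using win[OF jm] win[OF km] eq \<epsilon>E[OF jm] \<epsilon>E[OF km] \<epsilon>E[OF pv_lt[OF jm]] \<epsilon>E[OF pv_lt[OF km]]
      unfolding S_def z_def by auto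
    have "card S = 4"
    proof -
      have n: "\<epsilon> (pv j) \<noteq> \<epsilon> j" "\<epsilon> (pv j) \<noteq> \<epsilon> (pv k)" "\<epsilon> (pv j) \<noteq> \<epsilon> k"
        "\<epsilon> j \<noteq> \<epsilon> (pv k)" "\<epsilon> j \<noteq> \<epsilon> k" "\<epsilon> (pv k) \<noteq> \<epsilon> k"
        using \<epsilon>dist[OF pv_lt[OF jm] jm pv_ne[OF jm]] \<epsilon>dist[OF pv_lt[OF jm] pv_lt[OF km] i1]
          \<epsilon>dist[OF pv_lt[OF jm] km i2] \<epsilon>dist[OF jm pv_lt[OF km] i3] \<epsilon>dist[OF jm km jk]
          \<epsilon>dist[OF pv_lt[OF km] km pv_ne[OF km]] by simp_all
      show ?thesis using n unfolding S_def by simp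
    qed
    moreover have "card S \<le> 3" using card_mono[OF fz Ssub] cz by simp
    ultimately show False by simp
  qed
  show "is_cycle V E (projected_walk fs)"
    unfolding is_cycle_def pw
  proof (intro conjI exI[of _ "map w [0..<m]"])
    show "3 \<le> length (map \<epsilon> [0..<m])" using m3 by simp
    show "set (map \<epsilon> [0..<m]) \<subseteq> E" using \<epsilon>E by auto
    show "length (map w [0..<m]) = length (map \<epsilon> [0..<m])" by simp
    show "distinct (map w [0..<m])"
      using w_inj by (auto simp: distinct_map inj_on_def)
    show "set (map w [0..<m]) \<subseteq> V" using wV by auto
    show "\<forall>j<length (map \<epsilon> [0..<m]). map \<epsilon> [0..<m] ! j =
        {map w [0..<m] ! j, map w [0..<m] ! ((j + 1) mod length (map \<epsilon> [0..<m]))}"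
    proof (intro allI impI)
      fix j assume "j < length (map \<epsilon> [0..<m])"
      then have jm: "j < m" by simp
      show "map \<epsilon> [0..<m] ! j = {map w [0..<m] ! j, map w [0..<m] ! ((j + 1) mod length (map \<epsilon> [0..<m]))}"
        using \<epsilon>_eq[OF jm] jm nx_lt[OF jm] by (simp add: nx_def)
    qed
  qed
qed

end
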